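(* There exist constants $\epsilon_1'>0$, $\tau_1'>0$ and $C>0$, depending only on $\underline{U}=(1,0)^{\top}$ and $a_\infty$, such that the following holds for all $\tau\in(0,\tau_1')$ and all states $U_L,\hat U_R,U_R$ in the $\epsilon_1'$-neighborhood of $\underline{U}$. (a) If $U_R=\Phi(\beta_1,\beta_2;U_L)$ and $U_R=\Phi(\alpha_1,\alpha_2;U_L,\tau^2)$, then $|\beta_j-\alpha_j|\le C(|\alpha_1|+|\alpha_2|)\tau^2$ for $j=1,2$. (b) If $U_R=\Phi(\beta_1,\beta_2;U_L)$, $\hat U_R=\Phi(\alpha_1,\alpha_2;U_L,\tau^2)$ and $\alpha=|U_R-\hat U_R|$, then $|\beta_j-\alpha_j|\le C(|\alpha_1|+|\alpha_2|)\tau^2+C\alpha$ for $j=1,2$.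
   Context: Fix $\gamma>1$ and $a_\infty>0$; states are $U=(\rho,v)^{\top}$. Velocity function. For $\tau>0$ let $$u(\rho,v;\tau^2)=\tau^{-2}\Big(-1+\sqrt{1-\tau^2\big(v^2+\tfrac{2(\rho^{\gamma-1}-1)}{(\gamma-1)a_\infty^2}\big)}\Big),$$ and let $u(\rho,v;0)=-\tfrac12v^2-\tfrac{\rho^{\gamma-1}-1}{(\gamma-1)a_\infty^2}$. Systems. Set $G(U,\tau^2)=(\rho(1+\tau^2u),v)^{\top}$ and $F(U,\tau^2)=(\rho v,-u)^{\top}$, and consider $\partial_xG(U,\tau^2)+\partial_yF(U,\tau^2)=0$. The $\tau=0$ system is $\partial_xU+\partial_yF(U,0)=0$. Near $\underline{U}$ and for small $\tau\ge0$ these systems are strictly hyperbolic, with characteristic speeds $\lambda_1<\lambda_2$ and genuinely nonlinear fields. Let $r_k(U,\tau^2)$ be the right eigenvectors, normalized by $\nabla_U\lambda_k\cdot r_k=1$. Wave curves. For $k=1,2$, $\Phi_k(\alpha;U,\tau^2)$ denotes the $k$-th physically admissible wave curve through $U$: - it is the Lax shock curve for $\alpha<0$ and the rarefaction curve for $\alpha>0$; - it is $C^2$ in $(\alpha,U,\tau^2)$; - $\Phi_k(0;U,\tau^2)=U$ and $\partial_\alpha\Phi_k(0;U,\tau^2)=r_k(U,\tau^2)$. Write $\Phi_k(\alpha;U):=\Phi_k(\alpha;U,0)$ for the $\tau=0$ system. Compositions: - $\Phi(\alpha_1,\alpha_2;U,\tau^2)=\Phi_2(\alpha_2;\Phi_1(\alpha_1;U,\tau^2),\tau^2)$;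 - $\Phi(\beta_1,\beta_2;U)=\Phi_2(\beta_2;\Phi_1(\beta_1;U))$. *)

theory Defs
  imports "HOL-Analysis.Analysis"
begin

text \<open>States U = (rho, v) are elements of real \<times> real (Euclidean norm).
  The parameter s stands for tau^2.\<close>

definition Ubar :: "real \<times> real" where
  "Ubar = (1, 0)"

definition uvel :: "real \<Rightarrow> real \<Rightarrow> real \<Rightarrow> real \<Rightarrow> real \<Rightarrow> real" where
  "uvel \<gamma> ainf \<rho> v s =
     (if s = 0 then - (v^2) / 2 - (\<rho> powr (\<gamma> - 1) - 1) / ((\<gamma> - 1) * ainf^2)
      else (-1 + sqrt (1 - s * (v^2 + 2 * (\<rho> powr (\<gamma> - 1) - 1) / ((\<gamma> - 1) * ainf^2)))) / s)"

definition Gflux :: "real \<Rightarrow> real \<Rightarrow> real \<times> real \<Rightarrow> real \<Rightarrow> real \<times> real" where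
  "Gflux \<gamma> ainf U s = (fst U * (1 + s * uvel \<gamma> ainf (fst U) (snd U) s), snd U)"

definition Fflux :: "real \<Rightarrow> real \<Rightarrow> real \<times> real \<Rightarrow> real \<Rightarrow> real \<times> real" where
  "Fflux \<gamma> ainf U s = (fst U * snd U, - uvel \<gamma> ainf (fst U) (snd U) s)"

definition C2_on :: "('a::real_normed_vector \<Rightarrow> 'b::real_normed_vector) \<Rightarrow> 'a set \<Rightarrow> bool" where
  "C2_on f S \<longleftrightarrow> (\<exists>D D2. (\<forall>x\<in>S. (f has_derivative blinfun_apply (D x)) (at x)) \<and>
                           (\<forall>x\<in>S. (D has_derivative blinfun_apply (D2 x)) (at x)) \<and>
                           continuous_on S D2)"

text \<open>lam is a characteristic speed of dG U_x + dF U_y = 0 at (U,s) with right eigenvector r,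
  i.e. dF r = lam dG r, r nonzero.\<close>
definition is_char :: "real \<Rightarrow> real \<Rightarrow> real \<Rightarrow> real \<times> real \<Rightarrow> real \<times> real \<Rightarrow> real \<Rightarrow> bool" where
  "is_char \<gamma> ainf lam r U s \<longleftrightarrow> r \<noteq> 0 \<and>
     frechet_derivative (\<lambda>W. Fflux \<gamma> ainf W s) (at U) r =
       lam *\<^sub>R frechet_derivative (\<lambda>W. Gflux \<gamma> ainf W s) (at U) r"

text \<open>Strict hyperbolicity, genuine nonlinearity and normalisation of the eigenvectors
  on the region dist U Ubar < delta, 0 <= s < delta.\<close>
definition char_fields ::
  "real \<Rightarrow> real \<Rightarrow> real \<Rightarrow> (real \<times> real \<Rightarrow> real \<Rightarrow> real) \<Rightarrow> (real \<times> real \<Rightarrow> real \<Rightarrow> real)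
   \<Rightarrow> (real \<times> real \<Rightarrow> real \<Rightarrow> real \<times> real) \<Rightarrow> (real \<times> real \<Rightarrow> real \<Rightarrow> real \<times> real) \<Rightarrow> bool" where
  "char_fields \<gamma> ainf \<delta> lam1 lam2 r1 r2 \<longleftrightarrow>
     (\<forall>U s. dist U Ubar < \<delta> \<and> 0 \<le> s \<and> s < \<delta> \<longrightarrow>
        lam1 U s < lam2 U s \<and>
        is_char \<gamma> ainf (lam1 U s) (r1 U s) U s \<and>
        is_char \<gamma> ainf (lam2 U s) (r2 U s) U s \<and>
        (\<lambda>W. lam1 W s) differentiable (at U) \<and>
        (\<lambda>W. lam2 W s) differentiable (at U) \<and>
        frechet_derivative (\<lambda>W. lam1 W s) (at U) (r1 U s) = 1 \<and>
        frechet_derivative (\<lambda>W. lam2 W s) (at U) (r2 U s) = 1)"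

text \<open>Phi is the k-th physically admissible wave curve (for the k-th field with speed lam
  and normalised eigenvector r): C^2 jointly in (alpha, U, s), passes through U with
  tangent r at alpha = 0, is a rarefaction (integral) curve of r for alpha > 0 and a
  Lax k-shock curve (Rankine--Hugoniot plus Lax entropy inequalities) for alpha < 0.\<close>
definition wave_curve ::
  "real \<Rightarrow> real \<Rightarrow> real \<Rightarrow> (real \<times> real \<Rightarrow> real \<Rightarrow> real) \<Rightarrow> (real \<times> real \<Rightarrow> real \<Rightarrow> real \<times> real)
   \<Rightarrow> (real \<Rightarrow> real \<times> real \<Rightarrow> real \<Rightarrow> real \<times> real) \<Rightarrow> bool" where
  "wave_curve \<gamma> ainf \<delta> lam r Phi \<longleftrightarrow>
     C2_on (\<lambda>(a, U, s). Phi a U s) {(a, U, s). \<bar>a\<bar> < \<delta> \<and> dist U Ubar < \<delta> \<and> \<bar>s\<bar> < \<delta>} \<and>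
     (\<forall>U s. dist U Ubar < \<delta> \<and> 0 \<le> s \<and> s < \<delta> \<longrightarrow>
        Phi 0 U s = U \<and>
        ((\<lambda>a. Phi a U s) has_vector_derivative r U s) (at 0) \<and>
        (\<forall>a. 0 < a \<and> a < \<delta> \<and> dist (Phi a U s) Ubar < \<delta> \<longrightarrow>
             ((\<lambda>b. Phi b U s) has_vector_derivative r (Phi a U s) s) (at a)) \<and>
        (\<forall>a. - \<delta> < a \<and> a < 0 \<and> dist (Phi a U s) Ubar < \<delta> \<longrightarrow>
             (\<exists>\<sigma>. Fflux \<gamma> ainf (Phi a U s) s - Fflux \<gamma> ainf U s =
                     \<sigma> *\<^sub>R (Gflux \<gamma> ainf (Phi a U s) s - Gflux \<gamma> ainf U s) \<and>
                   lam (Phi a U s) s < \<sigma> \<and> \<sigma> < lam U s)))"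

end

theory Submission
  imports Defs
begin

lemma small_lip:
  fixes f :: "'a::real_normed_vector \<Rightarrow> 'b::real_normed_vector" and D :: "'a \<Rightarrow> 'a \<Rightarrow>\<^sub>L 'b"
  assumes S: "open S" "x0 \<in> S" and der: "\<And>x. x \<in> S \<Longrightarrow> (f has_derivative blinfun_apply (D x)) (at x)"
    and cont: "continuous (at x0) D" and eta: "\<eta> > 0"
  shows "\<exists>\<rho>>0. \<forall>x y. x \<in> ball x0 \<rho> \<longrightarrow> y \<in> ball x0 \<rho> \<longrightarrow>
           norm (f x - f y - D x0 (x - y)) \<le> \<eta> * norm (x - y)"
proof -
  obtain r1 where r1: "r1 > 0" "ball x0 r1 \<subseteq> S" using S open_contains_ball by blast
  obtain r2 where r2: "r2 > 0" "\<forall>x. dist x x0 < r2 \<longrightarrow> dist (D x) (D x0) < \<eta>"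
    using cont eta unfolding continuous_at_eps_delta by blast
  define \<rho> where "\<rho> = min r1 r2"
  have B: "ball x0 \<rho> \<subseteq> S" using r1 \<rho>_def by auto
  show ?thesis
  proof (intro exI[of _ \<rho>] conjI allI impI)
    show "\<rho> > 0" using r1 r2 \<rho>_def by auto
    fix x y assume x: "x \<in> ball x0 \<rho>" and y: "y \<in> ball x0 \<rho>"
    define g where "g z = f z - D x0 z" for z
    have dg: "(g has_derivative blinfun_apply (D z - D x0)) (at z within ball x0 \<rho>)" if "z \<in> ball x0 \<rho>" for z
    proof -
      have "(g has_derivative (\<lambda>h. D z h - D x0 h)) (at z)"
        unfolding g_def using der[of z] B that
        by (auto intro!: derivative_eq_intros blinfun.bounded_linear_right)
      moreover have "blinfun_apply (D z - D x0) = (\<lambda>h. D z h - D x0 h)"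
        by (rule ext) (simp add: blinfun.diff_left)
      ultimately show ?thesis by (auto intro: has_derivative_at_withinI)
    qed
    have bd: "onorm (blinfun_apply (D z - D x0)) \<le> \<eta>" if "z \<in> ball x0 \<rho>" for z
    proof -
      have "dist z x0 < r2" using that \<rho>_def by (auto simp: dist_commute)
      then have "norm (D z - D x0) < \<eta>" using r2 by (auto simp: dist_norm)
      then show ?thesis by (simp add: norm_blinfun.rep_eq)
    qed
    have "norm (g x - g y) \<le> \<eta> * norm (x - y)"
      by (rule differentiable_bound[OF convex_ball dg bd x y])
    moreover have "g x - g y = f x - f y - D x0 (x - y)"
      by (simp add: g_def blinfun.diff_right)
    ultimately show "norm (f x - f y - D x0 (x - y)) \<le> \<eta> * norm (x - y)" by simp
  qed
qed


lemma norm3: "norm ((a::real), (U::real\<times>real), (s::real)) \<le> \<bar>a\<bar> + norm U + \<bar>s\<bar>"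
proof -
  have "norm (a, U, s) \<le> norm a + norm (U, s)" by (rule norm_Pair_le)
  also have "norm (U, s) \<le> norm U + norm s" by (rule norm_Pair_le)
  finally show ?thesis by simp
qed

lemma open_S: "open {(a::real, U::real\<times>real, s::real). \<bar>a\<bar> < \<delta> \<and> dist U Ubar < \<delta> \<and> \<bar>s\<bar> < \<delta>}"
proof -
  have "{(a::real, U::real\<times>real, s::real). \<bar>a\<bar> < \<delta> \<and> dist U Ubar < \<delta> \<and> \<bar>s\<bar> < \<delta>}
     = {x. \<bar>fst x\<bar> < \<delta>} \<inter> {x. dist (fst (snd x)) Ubar < \<delta>} \<inter> {x. \<bar>snd (snd x)\<bar> < \<delta>}"
    by auto
  moreover have "open ({x::real\<times>(real\<times>real)\<times>real. \<bar>fst x\<bar> < \<delta>} \<inter> {x. dist (fst (snd x)) Ubar < \<delta>} \<inter> {x. \<bar>snd (snd x)\<bar> < \<delta>})"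
    by (intro open_Int open_Collect_less continuous_intros)
  ultimately show ?thesis by simp
qed

lemma wc_D:
  assumes wc: "wave_curve \<gamma> ainf \<delta> lam r Phi" and d: "\<delta> > 0"
  obtains D D2 where
    "\<And>x. x \<in> {(a, U, s). \<bar>a\<bar> < \<delta> \<and> dist U Ubar < \<delta> \<and> \<bar>s\<bar> < \<delta>} \<Longrightarrow>
        ((\<lambda>(a, U, s). Phi a U s) has_derivative blinfun_apply (D x)) (at x)"
    "\<And>x. x \<in> {(a, U, s). \<bar>a\<bar> < \<delta> \<and> dist U Ubar < \<delta> \<and> \<bar>s\<bar> < \<delta>} \<Longrightarrow>
        (D has_derivative blinfun_apply (D2 x)) (at x)"
    "continuous_on {(a, U, s). \<bar>a\<bar> < \<delta> \<and> dist U Ubar < \<delta> \<and> \<bar>s\<bar> < \<delta>} D2"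
  using wc unfolding wave_curve_def C2_on_def by blast

lemma wc_pt:
  assumes wc: "wave_curve \<gamma> ainf \<delta> lam r Phi" and "dist U Ubar < \<delta>" "0 \<le> s" "s < \<delta>"
  shows "Phi 0 U s = U" "((\<lambda>a. Phi a U s) has_vector_derivative r U s) (at 0)"
proof -
  have "\<forall>U s. dist U Ubar < \<delta> \<and> 0 \<le> s \<and> s < \<delta> \<longrightarrow>
        Phi 0 U s = U \<and> ((\<lambda>a. Phi a U s) has_vector_derivative r U s) (at 0)"
    using wc unfolding wave_curve_def by blast
  then show "Phi 0 U s = U" "((\<lambda>a. Phi a U s) has_vector_derivative r U s) (at 0)"
    using assms by blast+
qed

lemma wc_P1:
  assumes wc: "wave_curve \<gamma> ainf \<delta> lam r Phi" and d: "\<delta> > 0"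
    and DF: "((\<lambda>(a, U, s). Phi a U s) has_derivative blinfun_apply D0) (at (0, Ubar, 0))"
  shows "D0 (h, V, 0) = h *\<^sub>R r Ubar 0 + V"
proof -
  let ?F = "\<lambda>(a, U, s). Phi a U s"
  have wc0: "Phi 0 U 0 = U" if "dist U Ubar < \<delta>" for U
    using wc_pt[OF wc that] d by auto
  have vd: "((\<lambda>a. Phi a Ubar 0) has_vector_derivative r Ubar 0) (at 0)"
    using wc_pt[OF wc, of Ubar 0] d by auto
  have i1: "((\<lambda>a. (a, Ubar, 0::real)) has_derivative (\<lambda>h. (h, 0, 0))) (at (0::real))"
    by (auto intro!: derivative_eq_intros simp: zero_prod_def)
  have "((\<lambda>a. ?F (a, Ubar, 0)) has_derivative (\<lambda>h. D0 (h, 0, 0))) (at 0)"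
    using has_derivative_compose[OF i1, of ?F "blinfun_apply D0"] DF by simp
  then have e1: "((\<lambda>a. Phi a Ubar 0) has_derivative (\<lambda>h. D0 (h, 0, 0))) (at 0)" by simp
  have e1': "((\<lambda>a. Phi a Ubar 0) has_derivative (\<lambda>h. h *\<^sub>R r Ubar 0)) (at 0)"
    using vd by (simp add: has_vector_derivative_def)
  have A: "(\<lambda>h. D0 (h, 0, 0)) = (\<lambda>h. h *\<^sub>R r Ubar 0)"
    using has_derivative_unique[OF e1 e1'] .
  have i2: "((\<lambda>U. (0::real, U, 0::real)) has_derivative (\<lambda>V. (0, V, 0))) (at Ubar)"
    by (auto intro!: derivative_eq_intros simp: zero_prod_def)
  have "((\<lambda>U. ?F (0, U, 0)) has_derivative (\<lambda>V. D0 (0, V, 0))) (at Ubar)"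
    using has_derivative_compose[OF i2, of ?F "blinfun_apply D0"] DF by simp
  then have e2: "((\<lambda>U. Phi 0 U 0) has_derivative (\<lambda>V. D0 (0, V, 0))) (at Ubar)" by simp
  have e2': "((\<lambda>U. Phi 0 U 0) has_derivative (\<lambda>V. V)) (at Ubar)"
    by (rule has_derivative_transform_within_open[OF has_derivative_ident, of "ball Ubar \<delta>"])
       (use d wc0 in \<open>auto simp: dist_commute\<close>)
  have B: "(\<lambda>V. D0 (0, V, 0)) = (\<lambda>V. V)"
    using has_derivative_unique[OF e2 e2'] .
  have "D0 (h, V, 0) = D0 ((h, 0, 0) + (0, V, 0))" by simp
  also have "\<dots> = D0 (h, 0, 0) + D0 (0, V, 0)" by (rule blinfun.add_right)
  also have "\<dots> = h *\<^sub>R r Ubar 0 + V" using fun_cong[OF A, of h] fun_cong[OF B, of V] by simp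
  finally show ?thesis .
qed


lemma x0_in: "\<delta> > 0 \<Longrightarrow> (0::real, Ubar, 0::real) \<in> {(a, U, s). \<bar>a\<bar> < \<delta> \<and> dist U Ubar < \<delta> \<and> \<bar>s\<bar> < \<delta>}"
  by auto

lemma dist3: "dist ((a::real), (U::real\<times>real), (s::real)) (0, Ubar, 0) \<le> \<bar>a\<bar> + dist U Ubar + \<bar>s\<bar>"
  using norm3[of a "U - Ubar" s] by (simp add: dist_norm)

lemma wc_P2:
  assumes wc: "wave_curve \<gamma> ainf \<delta> lam r Phi" and d: "\<delta> > 0" and eta: "\<eta> > 0"
  shows "\<exists>\<rho>>0. \<rho> \<le> \<delta> \<and> (\<forall>a b U V. \<bar>a\<bar> < \<rho> \<longrightarrow> \<bar>b\<bar> < \<rho> \<longrightarrow> dist U Ubar < \<rho> \<longrightarrow> dist V Ubar < \<rho> \<longrightarrow>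
     norm (Phi a U 0 - Phi b V 0 - ((a - b) *\<^sub>R r Ubar 0 + (U - V))) \<le> \<eta> * (\<bar>a - b\<bar> + norm (U - V)))"
proof -
  let ?S = "{(a, U, s). \<bar>a\<bar> < \<delta> \<and> dist U Ubar < \<delta> \<and> \<bar>s\<bar> < \<delta>}"
  let ?F = "\<lambda>(a, U, s). Phi a U s"
  obtain D D2 where D: "\<And>x. x \<in> ?S \<Longrightarrow> (?F has_derivative blinfun_apply (D x)) (at x)"
    and D2: "\<And>x. x \<in> ?S \<Longrightarrow> (D has_derivative blinfun_apply (D2 x)) (at x)"
    using wc_D[OF wc d] by metis
  have x0: "(0, Ubar, 0) \<in> ?S" using d by auto
  have cD: "continuous (at (0, Ubar, 0)) D"
    using D2[OF x0] by (rule has_derivative_continuous)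
  obtain \<rho>' where \<rho>': "\<rho>' > 0" "\<forall>x y. x \<in> ball (0, Ubar, 0) \<rho>' \<longrightarrow> y \<in> ball (0, Ubar, 0) \<rho>' \<longrightarrow>
           norm (?F x - ?F y - D (0, Ubar, 0) (x - y)) \<le> \<eta> * norm (x - y)"
    using small_lip[OF open_S x0 D cD eta] by blast
  define \<rho> where "\<rho> = min \<delta> (\<rho>' / 2)"
  show ?thesis
  proof (intro exI[of _ \<rho>] conjI allI impI)
    show "\<rho> > 0" "\<rho> \<le> \<delta>" using d \<rho>' by (auto simp: \<rho>_def)
    fix a b U V assume a: "\<bar>a\<bar> < \<rho>" and b: "\<bar>b\<bar> < \<rho>" and U: "dist U Ubar < \<rho>" and V: "dist V Ubar < \<rho>"
    have xin: "(a, U, 0::real) \<in> ball (0, Ubar, 0) \<rho>'"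
      using dist3[of a U 0] a U by (auto simp: \<rho>_def dist_commute)
    have yin: "(b, V, 0::real) \<in> ball (0, Ubar, 0) \<rho>'"
      using dist3[of b V 0] b V by (auto simp: \<rho>_def dist_commute)
    have "norm (Phi a U 0 - Phi b V 0 - D (0, Ubar, 0) (a - b, U - V, 0)) \<le> \<eta> * norm (a - b, U - V, 0::real)"
      using \<rho>'(2)[rule_format, OF xin yin] by simp
    moreover have "D (0, Ubar, 0) (a - b, U - V, 0) = (a - b) *\<^sub>R r Ubar 0 + (U - V)"
      by (rule wc_P1[OF wc d D[OF x0]])
    moreover have "norm (a - b, U - V, 0::real) \<le> \<bar>a - b\<bar> + norm (U - V)"
      using norm3[of "a - b" "U - V" 0] by simp
    ultimately show "norm (Phi a U 0 - Phi b V 0 - ((a - b) *\<^sub>R r Ubar 0 + (U - V))) \<le> \<eta> * (\<bar>a - b\<bar> + norm (U - V))"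
      using eta by (smt (verit) mult_left_mono)
  qed
qed

lemma wc_P4:
  assumes wc: "wave_curve \<gamma> ainf \<delta> lam r Phi" and d: "\<delta> > 0" and e: "e > 0"
  shows "\<exists>\<rho>>0. \<forall>a U s. \<bar>a\<bar> < \<rho> \<longrightarrow> dist U Ubar < \<rho> \<longrightarrow> \<bar>s\<bar> < \<rho> \<longrightarrow> dist (Phi a U s) Ubar < e"
proof -
  let ?S = "{(a, U, s). \<bar>a\<bar> < \<delta> \<and> dist U Ubar < \<delta> \<and> \<bar>s\<bar> < \<delta>}"
  let ?F = "\<lambda>(a, U, s). Phi a U s"
  obtain D D2 where D: "\<And>x. x \<in> ?S \<Longrightarrow> (?F has_derivative blinfun_apply (D x)) (at x)"
    using wc_D[OF wc d] by metis
  have x0: "(0, Ubar, 0) \<in> ?S" using d by auto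
  have cF: "continuous (at (0, Ubar, 0)) ?F"
    using D[OF x0] by (rule has_derivative_continuous)
  have F0: "?F (0, Ubar, 0) = Ubar" using wc_pt(1)[OF wc, of Ubar 0] d by simp
  obtain \<rho>' where \<rho>': "\<rho>' > 0" "\<forall>x. dist x (0, Ubar, 0) < \<rho>' \<longrightarrow> dist (?F x) Ubar < e"
    using cF e F0 unfolding continuous_at_eps_delta by metis
  show ?thesis
  proof (intro exI[of _ "\<rho>'/3"] conjI allI impI)
    show "\<rho>'/3 > 0" using \<rho>' by simp
    fix a U s assume "\<bar>a\<bar> < \<rho>'/3" "dist U Ubar < \<rho>'/3" "\<bar>s\<bar> < \<rho>'/3"
    then have "dist (a, U, s) (0, Ubar, 0) < \<rho>'" using dist3[of a U s] by linarith
    then have "dist (?F (a, U, s)) Ubar < e" using \<rho>'(2) by blast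
    then show "dist (Phi a U s) Ubar < e" by simp
  qed
qed


lemma wc_P3:
  assumes wc: "wave_curve \<gamma> ainf \<delta> lam r Phi" and d: "\<delta> > 0"
  shows "\<exists>\<rho>>0. \<exists>K\<ge>0. \<rho> \<le> \<delta> \<and> (\<forall>a U s. \<bar>a\<bar> < \<rho> \<longrightarrow> dist U Ubar < \<rho> \<longrightarrow> 0 \<le> s \<longrightarrow> s < \<rho> \<longrightarrow>
     norm (Phi a U s - Phi a U 0) \<le> K * \<bar>a\<bar> * s)"
proof -
  let ?S = "{(a, U, s). \<bar>a\<bar> < \<delta> \<and> dist U Ubar < \<delta> \<and> \<bar>s\<bar> < \<delta>}"
  let ?F = "\<lambda>(a, U, s). Phi a U s"
  obtain D D2 where D: "\<And>x. x \<in> ?S \<Longrightarrow> (?F has_derivative blinfun_apply (D x)) (at x)"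
    and D2: "\<And>x. x \<in> ?S \<Longrightarrow> (D has_derivative blinfun_apply (D2 x)) (at x)"
    and cD2: "continuous_on ?S D2"
    using wc_D[OF wc d] by metis
  have x0: "(0, Ubar, 0) \<in> ?S" using d by auto
  have c2: "continuous (at (0, Ubar, 0)) D2"
    using cD2 x0 open_S continuous_on_eq_continuous_at by blast
  obtain \<rho>' where \<rho>': "\<rho>' > 0" "\<forall>x y. x \<in> ball (0, Ubar, 0) \<rho>' \<longrightarrow> y \<in> ball (0, Ubar, 0) \<rho>' \<longrightarrow>
           norm (D x - D y - D2 (0, Ubar, 0) (x - y)) \<le> 1 * norm (x - y)"
    using small_lip[OF open_S x0 D2 c2, of 1] by auto
  define M where "M = norm (D2 (0, Ubar, 0)) + 1"
  have M0: "M \<ge> 0" by (simp add: M_def)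
  have Dlip: "norm (D x - D y) \<le> M * norm (x - y)" if "x \<in> ball (0, Ubar, 0) \<rho>'" "y \<in> ball (0, Ubar, 0) \<rho>'" for x y
  proof -
    have "norm (D x - D y) \<le> norm (D x - D y - D2 (0, Ubar, 0) (x - y)) + norm (D2 (0, Ubar, 0) (x - y))"
      using norm_triangle_ineq[of "D x - D y - D2 (0, Ubar, 0) (x - y)" "D2 (0, Ubar, 0) (x - y)"] by simp
    also have "\<dots> \<le> norm (x - y) + norm (D2 (0, Ubar, 0)) * norm (x - y)"
      using \<rho>'(2) that norm_blinfun[of "D2 (0, Ubar, 0)" "x - y"] by (smt (verit))
    finally show ?thesis by (simp add: M_def algebra_simps)
  qed
  define \<rho> where "\<rho> = min \<delta> (\<rho>' / 3)"
  show ?thesis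
  proof (rule exI[of _ \<rho>], intro conjI exI[of _ M] allI impI M0)
    show "\<rho> > 0" "\<rho> \<le> \<delta>" using d \<rho>' by (auto simp: \<rho>_def)
    fix a U s assume a: "\<bar>a\<bar> < \<rho>" and U: "dist U Ubar < \<rho>" and s0: "0 \<le> s" and s: "s < \<rho>"
    define q where "q z = Phi z U s - Phi z U 0" for z
    have inS: "(z, U, t) \<in> ?S" if "\<bar>z\<bar> < \<rho>" "\<bar>t\<bar> < \<rho>" for z t
      using that U by (auto simp: \<rho>_def)
    have inB: "(z, U, t) \<in> ball (0, Ubar, 0) \<rho>'" if "\<bar>z\<bar> < \<rho>" "\<bar>t\<bar> < \<rho>" for z t
      using that U dist3[of z U t] by (auto simp: \<rho>_def dist_commute)
    have dq: "(q has_derivative (\<lambda>h. D (z, U, s) (h, 0, 0) - D (z, U, 0) (h, 0, 0))) (at z within ball 0 \<rho>)"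
      if z: "z \<in> ball 0 \<rho>" for z
    proof -
      have zz: "\<bar>z\<bar> < \<rho>" using z by simp
      have i1: "((\<lambda>a. (a, U, t)) has_derivative (\<lambda>h. (h, 0, 0))) (at z)" for t :: real
        by (auto intro!: derivative_eq_intros simp: zero_prod_def)
      have h1: "((\<lambda>a. ?F (a, U, t)) has_derivative (\<lambda>h. D (z, U, t) (h, 0, 0))) (at z)" if "\<bar>t\<bar> < \<rho>" for t
        using has_derivative_compose[OF i1, of ?F "blinfun_apply (D (z, U, t))"] D[OF inS[OF zz that]] by simp
      have "(q has_derivative (\<lambda>h. D (z, U, s) (h, 0, 0) - D (z, U, 0) (h, 0, 0))) (at z)"
        unfolding q_def using has_derivative_diff[OF h1 h1, of s 0] s s0 \<open>\<rho> > 0\<close> by simp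
      then show ?thesis by (rule has_derivative_at_withinI)
    qed
    have bd: "onorm (\<lambda>h. D (z, U, s) (h, 0, 0) - D (z, U, 0) (h, 0, 0)) \<le> M * s" if z: "z \<in> ball 0 \<rho>" for z
    proof (rule onorm_le)
      fix h :: real
      have zz: "\<bar>z\<bar> < \<rho>" using z by simp
      have "norm (D (z, U, s) (h, 0, 0) - D (z, U, 0) (h, 0, 0)) = norm ((D (z, U, s) - D (z, U, 0)) (h, 0, 0))"
        by (simp add: blinfun.diff_left)
      also have "\<dots> \<le> norm (D (z, U, s) - D (z, U, 0)) * norm (h, 0::real\<times>real, 0::real)"
        by (rule norm_blinfun)
      also have "\<dots> \<le> (M * norm ((z, U, s) - (z, U, 0::real))) * norm (h, 0::real\<times>real, 0::real)"
        by (intro mult_right_mono Dlip inB) (use zz s s0 \<open>\<rho> > 0\<close> in auto)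
      also have "\<dots> = M * s * norm h"
        using s0 by (simp add: norm_Pair zero_prod_def)
      finally show "norm (D (z, U, s) (h, 0, 0) - D (z, U, 0) (h, 0, 0)) \<le> M * s * norm h" .
    qed
    have "norm (q a - q 0) \<le> M * s * norm (a - 0)"
      using differentiable_bound[where f'="\<lambda>z h. D (z, U, s) (h, 0, 0) - D (z, U, 0) (h, 0, 0)", OF convex_ball dq bd, of a 0]
        a \<open>\<rho> > 0\<close> by auto
    moreover have "q 0 = 0"
      unfolding q_def using wc_pt(1)[OF wc, of U s] wc_pt(1)[OF wc, of U 0] U s s0 d
      by (auto simp: \<rho>_def)
    ultimately show "norm (Phi a U s - Phi a U 0) \<le> M * \<bar>a\<bar> * s"
      by (simp add: q_def mult_ac)
  qed
qed


lemma Fflux_diff: "\<gamma> > 1 \<Longrightarrow> ainf > 0 \<Longrightarrow> (\<lambda>W. Fflux \<gamma> ainf W 0) differentiable (at Ubar)"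
  unfolding Fflux_def uvel_def Ubar_def apply simp
  apply (rule differentiable_Pair)
   apply (rule differentiableI, (rule derivative_intros)+)
  apply (rule differentiableI, (rule derivative_intros)+)
  apply auto
  apply (rule differentiableI, (rule derivative_intros)+)
  apply simp
  done

lemma Gflux0: "(\<lambda>W. Gflux \<gamma> ainf W 0) = (\<lambda>W. W)"
  by (rule ext) (simp add: Gflux_def)

lemma indep_aux:
  fixes a b :: "real \<times> real" and L :: "real \<times> real \<Rightarrow> real \<times> real"
  assumes lin: "linear L" and a: "a \<noteq> 0" "L a = l1 *\<^sub>R a" and b: "b \<noteq> 0" "L b = l2 *\<^sub>R b"
    and l: "l1 < l2"
  shows "fst a * snd b - snd a * fst b \<noteq> 0"
proof
  assume d: "fst a * snd b - snd a * fst b = 0"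
  obtain c where c: "b = c *\<^sub>R a"
  proof (cases "fst a = 0")
    case True
    then have "snd a \<noteq> 0" using a(1) by (simp add: prod_eq_iff)
    then have "fst b = 0" using d True by simp
    show ?thesis
      by (rule that[of "snd b / snd a"]) (use True \<open>snd a \<noteq> 0\<close> \<open>fst b = 0\<close> in \<open>simp add: prod_eq_iff\<close>)
  next
    case False
    have "snd b = fst b / fst a * snd a" using d False by (simp add: field_simps)
    then show ?thesis
      by (intro that[of "fst b / fst a"]) (use False in \<open>simp add: prod_eq_iff\<close>)
  qed
  have "L b = c *\<^sub>R L a" using c lin by (simp add: linear_scale)
  then have "l2 *\<^sub>R (c *\<^sub>R a) = c *\<^sub>R (l1 *\<^sub>R a)" using a b c by simp
  then have "(c * (l2 - l1)) *\<^sub>R a = 0" by (simp add: algebra_simps)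
  then have "c = 0" using a(1) l by simp
  then show False using b(1) c by simp
qed

lemma indep:
  assumes g: "\<gamma> > 1" and ai: "ainf > 0" and d: "\<delta> > 0" and cf: "char_fields \<gamma> ainf \<delta> lam1 lam2 r1 r2"
  shows "fst (r1 Ubar 0) * snd (r2 Ubar 0) - snd (r1 Ubar 0) * fst (r2 Ubar 0) \<noteq> 0"
proof -
  have "lam1 Ubar 0 < lam2 Ubar 0 \<and> is_char \<gamma> ainf (lam1 Ubar 0) (r1 Ubar 0) Ubar 0 \<and>
        is_char \<gamma> ainf (lam2 Ubar 0) (r2 Ubar 0) Ubar 0"
    using cf[unfolded char_fields_def, rule_format, of Ubar 0] d by auto
  then have l: "lam1 Ubar 0 < lam2 Ubar 0" and c1: "is_char \<gamma> ainf (lam1 Ubar 0) (r1 Ubar 0) Ubar 0"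
    and c2: "is_char \<gamma> ainf (lam2 Ubar 0) (r2 Ubar 0) Ubar 0" by auto
  let ?L = "frechet_derivative (\<lambda>W. Fflux \<gamma> ainf W 0) (at Ubar)"
  have "((\<lambda>W. Fflux \<gamma> ainf W 0) has_derivative ?L) (at Ubar)"
    using Fflux_diff[OF g ai] frechet_derivative_works by blast
  then have lin: "linear ?L" using has_derivative_linear by blast
  have G: "frechet_derivative (\<lambda>W. Gflux \<gamma> ainf W 0) (at Ubar) = (\<lambda>x. x)"
    by (simp add: Gflux0)
  show ?thesis
    by (rule indep_aux[OF lin _ _ _ _ l]) (use c1 c2 G in \<open>auto simp: is_char_def\<close>)
qed


lemma coef_bound:
  fixes a b w :: "real \<times> real"
  assumes dd: "fst a * snd b - snd a * fst b \<noteq> 0" and w: "w = x1 *\<^sub>R a + x2 *\<^sub>R b"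
  shows "\<bar>x1\<bar> + \<bar>x2\<bar> \<le> ((\<bar>fst a\<bar> + \<bar>snd a\<bar> + \<bar>fst b\<bar> + \<bar>snd b\<bar>) / \<bar>fst a * snd b - snd a * fst b\<bar>) * norm w"
proof -
  define d where "d = fst a * snd b - snd a * fst b"
  have dpos: "\<bar>d\<bar> > 0" using dd d_def by simp
  have fw: "\<bar>fst w\<bar> \<le> norm w" and sw: "\<bar>snd w\<bar> \<le> norm w"
    using norm_fst_le[of "fst w" "snd w"] norm_snd_le[of "snd w" "fst w"] by auto
  have e1: "fst w * snd b - snd w * fst b = x1 * d" using w by (simp add: d_def algebra_simps)
  have e2: "fst a * snd w - snd a * fst w = x2 * d" using w by (simp add: d_def algebra_simps)
  have "\<bar>x1\<bar> * \<bar>d\<bar> \<le> \<bar>fst w\<bar> * \<bar>snd b\<bar> + \<bar>snd w\<bar> * \<bar>fst b\<bar>"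
    using e1 by (metis abs_mult abs_triangle_ineq4 abs_mult)
  also have "\<dots> \<le> norm w * \<bar>snd b\<bar> + norm w * \<bar>fst b\<bar>"
    by (intro add_mono mult_right_mono fw sw) auto
  finally have i1: "\<bar>x1\<bar> * \<bar>d\<bar> \<le> norm w * (\<bar>fst b\<bar> + \<bar>snd b\<bar>)" by (simp add: algebra_simps)
  have "\<bar>x2\<bar> * \<bar>d\<bar> \<le> \<bar>fst a\<bar> * \<bar>snd w\<bar> + \<bar>snd a\<bar> * \<bar>fst w\<bar>"
    using e2 by (metis abs_mult abs_triangle_ineq4 abs_mult)
  also have "\<dots> \<le> \<bar>fst a\<bar> * norm w + \<bar>snd a\<bar> * norm w"
    by (intro add_mono mult_left_mono fw sw) auto
  finally have i2: "\<bar>x2\<bar> * \<bar>d\<bar> \<le> norm w * (\<bar>fst a\<bar> + \<bar>snd a\<bar>)" by (simp add: algebra_simps)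
  have "(\<bar>x1\<bar> + \<bar>x2\<bar>) * \<bar>d\<bar> \<le> norm w * (\<bar>fst a\<bar> + \<bar>snd a\<bar> + \<bar>fst b\<bar> + \<bar>snd b\<bar>)"
    using i1 i2 by (simp add: algebra_simps)
  then have "\<bar>x1\<bar> + \<bar>x2\<bar> \<le> norm w * (\<bar>fst a\<bar> + \<bar>snd a\<bar> + \<bar>fst b\<bar> + \<bar>snd b\<bar>) / \<bar>d\<bar>"
    using dpos by (simp add: pos_le_divide_eq)
  then show ?thesis unfolding d_def by (simp add: ac_simps)
qed


theorem proposition3p2:
  fixes \<gamma> ainf \<delta> :: real
    and lam1 lam2 :: "real \<times> real \<Rightarrow> real \<Rightarrow> real"
    and r1 r2 :: "real \<times> real \<Rightarrow> real \<Rightarrow> real \<times> real"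
    and Phi1 Phi2 :: "real \<Rightarrow> real \<times> real \<Rightarrow> real \<Rightarrow> real \<times> real"
  assumes "\<gamma> > 1" and "ainf > 0" and "\<delta> > 0"
    and "char_fields \<gamma> ainf \<delta> lam1 lam2 r1 r2"
    and "wave_curve \<gamma> ainf \<delta> lam1 r1 Phi1"
    and "wave_curve \<gamma> ainf \<delta> lam2 r2 Phi2"
  shows "\<exists>\<epsilon> \<tau>1 C. \<epsilon> > 0 \<and> \<tau>1 > 0 \<and> C > 0 \<and>
    (\<forall>\<tau> UL UhR UR \<alpha>1 \<alpha>2 \<beta>1 \<beta>2.
       0 < \<tau> \<and> \<tau> < \<tau>1 \<and>
       dist UL Ubar < \<epsilon> \<and> dist UhR Ubar < \<epsilon> \<and> dist UR Ubar < \<epsilon> \<and>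
       \<bar>\<alpha>1\<bar> < \<epsilon> \<and> \<bar>\<alpha>2\<bar> < \<epsilon> \<and> \<bar>\<beta>1\<bar> < \<epsilon> \<and> \<bar>\<beta>2\<bar> < \<epsilon> \<longrightarrow>
       ((UR = Phi2 \<beta>2 (Phi1 \<beta>1 UL 0) 0 \<and>
         UR = Phi2 \<alpha>2 (Phi1 \<alpha>1 UL (\<tau>^2)) (\<tau>^2)) \<longrightarrow>
          \<bar>\<beta>1 - \<alpha>1\<bar> \<le> C * (\<bar>\<alpha>1\<bar> + \<bar>\<alpha>2\<bar>) * \<tau>^2 \<and>
          \<bar>\<beta>2 - \<alpha>2\<bar> \<le> C * (\<bar>\<alpha>1\<bar> + \<bar>\<alpha>2\<bar>) * \<tau>^2) \<and>
       ((UR = Phi2 \<beta>2 (Phi1 \<beta>1 UL 0) 0 \<and>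
         UhR = Phi2 \<alpha>2 (Phi1 \<alpha>1 UL (\<tau>^2)) (\<tau>^2)) \<longrightarrow>
          \<bar>\<beta>1 - \<alpha>1\<bar> \<le> C * (\<bar>\<alpha>1\<bar> + \<bar>\<alpha>2\<bar>) * \<tau>^2 + C * norm (UR - UhR) \<and>
          \<bar>\<beta>2 - \<alpha>2\<bar> \<le> C * (\<bar>\<alpha>1\<bar> + \<bar>\<alpha>2\<bar>) * \<tau>^2 + C * norm (UR - UhR)))"
proof -
  note g = assms(1) and ai = assms(2) and d = assms(3) and cf = assms(4)
    and wc1 = assms(5) and wc2 = assms(6)
  define a where "a = r1 Ubar 0"
  define b where "b = r2 Ubar 0"
  have dd: "fst a * snd b - snd a * fst b \<noteq> 0"
    unfolding a_def b_def by (rule indep[OF g ai d cf])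
  define K0 where "K0 = (\<bar>fst a\<bar> + \<bar>snd a\<bar> + \<bar>fst b\<bar> + \<bar>snd b\<bar>) / \<bar>fst a * snd b - snd a * fst b\<bar>"
  have K0: "K0 \<ge> 0" unfolding K0_def by simp
  have cb: "\<bar>x1\<bar> + \<bar>x2\<bar> \<le> K0 * norm (x1 *\<^sub>R a + x2 *\<^sub>R b)" for x1 x2
    unfolding K0_def by (rule coef_bound[OF dd refl])
  define R where "R = norm a"
  have R: "R \<ge> 0" by (simp add: R_def)
  define \<eta> where "\<eta> = 1 / (2 * (K0 + 1) * (2 + R))"
  have eta: "\<eta> > 0" using K0 R by (simp add: \<eta>_def)
  have "1 * 1 \<le> (K0 + 1) * (2 + R)" using K0 R by (intro mult_mono) auto
  then have "1 \<le> 2 * (K0 + 1) * (2 + R)" by linarith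
  then have eta1: "\<eta> \<le> 1" by (simp add: \<eta>_def)
  have nz: "2 + R \<noteq> 0" "K0 + 1 \<noteq> 0" using K0 R by auto
  have "\<eta> * (2 + R) = 1 / (2 * (K0 + 1))"
    unfolding \<eta>_def using nz by (simp add: divide_simps)
  then have "K0 * (\<eta> * (2 + R)) = K0 / (2 * (K0 + 1))" by simp
  also have "\<dots> \<le> 1/2" using K0 by (simp add: field_simps)
  finally have etaK: "K0 * (\<eta> * (2 + R)) \<le> 1/2" .
  obtain \<rho>1 where \<rho>1: "\<rho>1 > 0" "\<rho>1 \<le> \<delta>" and P21: "\<And>a b U V. \<bar>a\<bar> < \<rho>1 \<Longrightarrow> \<bar>b\<bar> < \<rho>1 \<Longrightarrow> dist U Ubar < \<rho>1 \<Longrightarrow> dist V Ubar < \<rho>1 \<Longrightarrow>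
     norm (Phi1 a U 0 - Phi1 b V 0 - ((a - b) *\<^sub>R r1 Ubar 0 + (U - V))) \<le> \<eta> * (\<bar>a - b\<bar> + norm (U - V))"
    using wc_P2[OF wc1 d eta] by metis
  obtain \<rho>2 where \<rho>2: "\<rho>2 > 0" "\<rho>2 \<le> \<delta>" and P22: "\<And>a b U V. \<bar>a\<bar> < \<rho>2 \<Longrightarrow> \<bar>b\<bar> < \<rho>2 \<Longrightarrow> dist U Ubar < \<rho>2 \<Longrightarrow> dist V Ubar < \<rho>2 \<Longrightarrow>
     norm (Phi2 a U 0 - Phi2 b V 0 - ((a - b) *\<^sub>R r2 Ubar 0 + (U - V))) \<le> \<eta> * (\<bar>a - b\<bar> + norm (U - V))"
    using wc_P2[OF wc2 d eta] by metis
  obtain \<rho>3 K1 where \<rho>3: "\<rho>3 > 0" "K1 \<ge> 0" and P31: "\<And>a U s. \<bar>a\<bar> < \<rho>3 \<Longrightarrow> dist U Ubar < \<rho>3 \<Longrightarrow> 0 \<le> s \<Longrightarrow> s < \<rho>3 \<Longrightarrow>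
     norm (Phi1 a U s - Phi1 a U 0) \<le> K1 * \<bar>a\<bar> * s"
    using wc_P3[OF wc1 d] by metis
  obtain \<rho>4 K2 where \<rho>4: "\<rho>4 > 0" "K2 \<ge> 0" and P32: "\<And>a U s. \<bar>a\<bar> < \<rho>4 \<Longrightarrow> dist U Ubar < \<rho>4 \<Longrightarrow> 0 \<le> s \<Longrightarrow> s < \<rho>4 \<Longrightarrow>
     norm (Phi2 a U s - Phi2 a U 0) \<le> K2 * \<bar>a\<bar> * s"
    using wc_P3[OF wc2 d] by metis
  have e5: "min \<rho>2 \<rho>4 > 0" using \<rho>2 \<rho>4 by simp
  obtain \<rho>5 where \<rho>5: "\<rho>5 > 0" and P4: "\<And>a U s. \<bar>a\<bar> < \<rho>5 \<Longrightarrow> dist U Ubar < \<rho>5 \<Longrightarrow> \<bar>s\<bar> < \<rho>5 \<Longrightarrow>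
     dist (Phi1 a U s) Ubar < min \<rho>2 \<rho>4"
    using wc_P4[OF wc1 d e5] by metis
  define \<epsilon> where "\<epsilon> = min (min \<rho>1 \<rho>2) (min \<rho>3 (min \<rho>4 \<rho>5))"
  define \<tau>1 where "\<tau>1 = min 1 (min \<rho>3 (min \<rho>4 \<rho>5))"
  define C where "C = max 1 (max (2 * (K0 + 1)) (2 * (K0 + 1) * (K2 + 2 * K1)))"
  have \<epsilon>0: "\<epsilon> > 0" using \<rho>1 \<rho>2 \<rho>3 \<rho>4 \<rho>5 by (simp add: \<epsilon>_def)
  have \<tau>10: "\<tau>1 > 0" using \<rho>3 \<rho>4 \<rho>5 by (simp add: \<tau>1_def)
  have C0: "C > 0" by (simp add: C_def)
  have core: "\<bar>\<beta>1 - \<alpha>1\<bar> + \<bar>\<beta>2 - \<alpha>2\<bar> \<le> C * (\<bar>\<alpha>1\<bar> + \<bar>\<alpha>2\<bar>) * s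
      + C * norm (Phi2 \<beta>2 (Phi1 \<beta>1 UL 0) 0 - Phi2 \<alpha>2 (Phi1 \<alpha>1 UL s) s)"
    if UL: "dist UL Ubar < \<epsilon>" and ab: "\<bar>\<alpha>1\<bar> < \<epsilon>" "\<bar>\<alpha>2\<bar> < \<epsilon>" "\<bar>\<beta>1\<bar> < \<epsilon>" "\<bar>\<beta>2\<bar> < \<epsilon>"
      and s: "0 \<le> s" "s < \<tau>1" for UL \<alpha>1 \<alpha>2 \<beta>1 \<beta>2 s
  proof -
    define Va where "Va = Phi1 \<alpha>1 UL 0"
    define Vb where "Vb = Phi1 \<beta>1 UL 0"
    define Vs where "Vs = Phi1 \<alpha>1 UL s"
    define x1 where "x1 = \<beta>1 - \<alpha>1"
    define x2 where "x2 = \<beta>2 - \<alpha>2"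
    define X where "X = \<bar>x1\<bar> + \<bar>x2\<bar>"
    define A where "A = \<bar>\<alpha>1\<bar> + \<bar>\<alpha>2\<bar>"
    define Dl where "Dl = Phi2 \<beta>2 Vb 0 - Phi2 \<alpha>2 Va 0"
    have s3: "s < \<rho>3" "s < \<rho>4" "s < \<rho>5" using s by (auto simp: \<tau>1_def)
    have Va: "dist Va Ubar < \<rho>2" "dist Va Ubar < \<rho>4"
      using P4[of \<alpha>1 UL 0] ab UL \<rho>5 by (auto simp: Va_def \<epsilon>_def)
    have Vb: "dist Vb Ubar < \<rho>2"
      using P4[of \<beta>1 UL 0] ab UL \<rho>5 by (auto simp: Vb_def \<epsilon>_def)
    have Vs: "dist Vs Ubar < \<rho>2" "dist Vs Ubar < \<rho>4"
      using P4[of \<alpha>1 UL s] ab UL s s3 by (auto simp: Vs_def \<epsilon>_def)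
    have e1: "norm (Vb - Va - x1 *\<^sub>R a) \<le> \<eta> * \<bar>x1\<bar>"
      using P21[of \<beta>1 \<alpha>1 UL UL] ab UL by (auto simp: Va_def Vb_def x1_def a_def \<epsilon>_def)
    have e2: "norm (Dl - (x2 *\<^sub>R b + (Vb - Va))) \<le> \<eta> * (\<bar>x2\<bar> + norm (Vb - Va))"
      using P22[of \<beta>2 \<alpha>2 Vb Va] ab Va Vb by (auto simp: Dl_def x2_def b_def \<epsilon>_def)
    have nV: "norm (Vb - Va) \<le> (R + 1) * \<bar>x1\<bar>"
    proof -
      have "norm (Vb - Va) \<le> norm (x1 *\<^sub>R a) + norm (Vb - Va - x1 *\<^sub>R a)"
        using norm_triangle_ineq[of "x1 *\<^sub>R a" "Vb - Va - x1 *\<^sub>R a"] by simp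
      also have "\<dots> \<le> R * \<bar>x1\<bar> + \<eta> * \<bar>x1\<bar>" using e1 by (simp add: R_def)
      also have "\<dots> \<le> (R + 1) * \<bar>x1\<bar>" using mult_right_mono[OF eta1 abs_ge_zero[of x1]] by (simp add: algebra_simps)
      finally show ?thesis .
    qed
    define w where "w = x1 *\<^sub>R a + x2 *\<^sub>R b"
    have "Dl - w = (Dl - (x2 *\<^sub>R b + (Vb - Va))) + (Vb - Va - x1 *\<^sub>R a)"
      by (simp add: w_def algebra_simps)
    then have "norm (Dl - w) \<le> norm (Dl - (x2 *\<^sub>R b + (Vb - Va))) + norm (Vb - Va - x1 *\<^sub>R a)"
      by (metis norm_triangle_ineq)
    then have "norm (Dl - w) \<le> \<eta> * (\<bar>x2\<bar> + norm (Vb - Va)) + \<eta> * \<bar>x1\<bar>"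
      using e1 e2 by linarith
    also have "\<dots> \<le> \<eta> * (\<bar>x2\<bar> + (R + 1) * \<bar>x1\<bar>) + \<eta> * \<bar>x1\<bar>"
      using nV eta by (intro add_mono mult_left_mono) auto
    also have "\<dots> \<le> (\<eta> * (2 + R)) * X"
      using eta R by (simp add: X_def algebra_simps)
    finally have nDw: "norm (Dl - w) \<le> (\<eta> * (2 + R)) * X" .
    have nw: "norm w \<le> norm Dl + (\<eta> * (2 + R)) * X"
      using nDw norm_triangle_ineq[of Dl "w - Dl"] by (simp add: norm_minus_commute)
    have "X \<le> K0 * norm w" using cb[of x1 x2] by (simp add: X_def w_def)
    also have "\<dots> \<le> K0 * (norm Dl + (\<eta> * (2 + R)) * X)" using nw K0 by (rule mult_left_mono)
    also have "\<dots> = K0 * norm Dl + (K0 * (\<eta> * (2 + R))) * X" by (simp add: algebra_simps)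
    also have "\<dots> \<le> K0 * norm Dl + (1/2) * X"
      using etaK by (intro add_left_mono mult_right_mono) (auto simp: X_def)
    finally have XD: "X \<le> 2 * K0 * norm Dl" by simp
    have f1: "norm (Phi2 \<alpha>2 Vs s - Phi2 \<alpha>2 Vs 0) \<le> K2 * \<bar>\<alpha>2\<bar> * s"
      using P32[of \<alpha>2 Vs s] ab Vs s s3 by (auto simp: \<epsilon>_def)
    have f2: "norm (Vs - Va) \<le> K1 * \<bar>\<alpha>1\<bar> * s"
      using P31[of \<alpha>1 UL s] ab UL s s3 by (auto simp: Vs_def Va_def \<epsilon>_def)
    have f3: "norm (Phi2 \<alpha>2 Vs 0 - Phi2 \<alpha>2 Va 0 - (Vs - Va)) \<le> \<eta> * norm (Vs - Va)"
      using P22[of \<alpha>2 \<alpha>2 Vs Va] ab Va Vs by (auto simp: \<epsilon>_def)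
    have f3': "norm (Phi2 \<alpha>2 Vs 0 - Phi2 \<alpha>2 Va 0) \<le> 2 * norm (Vs - Va)"
    proof -
      have "norm (Phi2 \<alpha>2 Vs 0 - Phi2 \<alpha>2 Va 0) \<le> norm (Vs - Va) + norm (Phi2 \<alpha>2 Vs 0 - Phi2 \<alpha>2 Va 0 - (Vs - Va))"
        using norm_triangle_ineq[of "Vs - Va" "Phi2 \<alpha>2 Vs 0 - Phi2 \<alpha>2 Va 0 - (Vs - Va)"] by simp
      also have "\<dots> \<le> norm (Vs - Va) + 1 * norm (Vs - Va)"
        using f3 eta1 mult_right_mono[OF eta1 norm_ge_zero[of "Vs - Va"]] by simp
      finally show ?thesis by simp
    qed
    define E where "E = Phi2 \<alpha>2 Vs s - Phi2 \<alpha>2 Va 0"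
    have "E = (Phi2 \<alpha>2 Vs s - Phi2 \<alpha>2 Vs 0) + (Phi2 \<alpha>2 Vs 0 - Phi2 \<alpha>2 Va 0)"
      by (simp add: E_def)
    then have "norm E \<le> norm (Phi2 \<alpha>2 Vs s - Phi2 \<alpha>2 Vs 0) + norm (Phi2 \<alpha>2 Vs 0 - Phi2 \<alpha>2 Va 0)"
      by (metis norm_triangle_ineq)
    then have "norm E \<le> K2 * \<bar>\<alpha>2\<bar> * s + 2 * (K1 * \<bar>\<alpha>1\<bar> * s)"
      using f1 f2 f3' by linarith
    also have "\<dots> \<le> (K2 + 2 * K1) * A * s"
      using \<rho>3 \<rho>4 s by (simp add: A_def algebra_simps mult_right_mono mult_left_mono)
    finally have nE: "norm E \<le> (K2 + 2 * K1) * A * s" .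
    define N where "N = norm (Phi2 \<beta>2 (Phi1 \<beta>1 UL 0) 0 - Phi2 \<alpha>2 (Phi1 \<alpha>1 UL s) s)"
    have "Dl = (Phi2 \<beta>2 (Phi1 \<beta>1 UL 0) 0 - Phi2 \<alpha>2 (Phi1 \<alpha>1 UL s) s) + E"
      by (simp add: Dl_def E_def Vb_def Vs_def Va_def)
    then have "norm Dl \<le> N + norm E"
      unfolding N_def by (metis norm_triangle_ineq)
    then have nD: "norm Dl \<le> N + (K2 + 2 * K1) * A * s"
      using nE by linarith
    have "X \<le> 2 * K0 * (N + (K2 + 2 * K1) * A * s)"
      using XD nD K0 by (smt (verit) mult_left_mono)
    also have "\<dots> \<le> 2 * (K0 + 1) * N + (2 * (K0 + 1) * (K2 + 2 * K1)) * (A * s)"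
    proof -
      have "0 \<le> N" "0 \<le> (K2 + 2 * K1) * A * s" using \<rho>3 \<rho>4 s by (auto simp: N_def A_def)
      then show ?thesis using K0 by (simp add: algebra_simps)
    qed
    also have "\<dots> \<le> C * N + C * (A * s)"
    proof -
      have "0 \<le> N" "0 \<le> A * s" using s by (auto simp: N_def A_def)
      then show ?thesis unfolding C_def
        by (intro add_mono mult_right_mono) auto
    qed
    finally show ?thesis by (simp add: X_def x1_def x2_def A_def N_def algebra_simps)
  qed
  show ?thesis
  proof (rule exI[of _ \<epsilon>], rule exI[of _ \<tau>1], rule exI[of _ C],
         intro conjI[OF \<epsilon>0] conjI[OF \<tau>10] conjI[OF C0] allI impI)
    fix \<tau> UL UhR UR \<alpha>1 \<alpha>2 \<beta>1 \<beta>2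
    assume H: "0 < \<tau> \<and> \<tau> < \<tau>1 \<and> dist UL Ubar < \<epsilon> \<and> dist UhR Ubar < \<epsilon> \<and> dist UR Ubar < \<epsilon> \<and>
       \<bar>\<alpha>1\<bar> < \<epsilon> \<and> \<bar>\<alpha>2\<bar> < \<epsilon> \<and> \<bar>\<beta>1\<bar> < \<epsilon> \<and> \<bar>\<beta>2\<bar> < \<epsilon>"
    have t1: "\<tau>1 \<le> 1" by (simp add: \<tau>1_def)
    have "\<tau>^2 \<le> \<tau>" using H t1 by (simp add: power2_eq_square mult_left_le)
    then have s: "0 \<le> \<tau>^2" "\<tau>^2 < \<tau>1" using H by auto
    have cr: "\<bar>\<beta>1 - \<alpha>1\<bar> + \<bar>\<beta>2 - \<alpha>2\<bar> \<le> C * (\<bar>\<alpha>1\<bar> + \<bar>\<alpha>2\<bar>) * \<tau>^2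
      + C * norm (Phi2 \<beta>2 (Phi1 \<beta>1 UL 0) 0 - Phi2 \<alpha>2 (Phi1 \<alpha>1 UL (\<tau>^2)) (\<tau>^2))"
      using core[of UL \<alpha>1 \<alpha>2 \<beta>1 \<beta>2 "\<tau>^2"] H s by blast
    show "(UR = Phi2 \<beta>2 (Phi1 \<beta>1 UL 0) 0 \<and> UR = Phi2 \<alpha>2 (Phi1 \<alpha>1 UL (\<tau>^2)) (\<tau>^2) \<longrightarrow>
          \<bar>\<beta>1 - \<alpha>1\<bar> \<le> C * (\<bar>\<alpha>1\<bar> + \<bar>\<alpha>2\<bar>) * \<tau>^2 \<and> \<bar>\<beta>2 - \<alpha>2\<bar> \<le> C * (\<bar>\<alpha>1\<bar> + \<bar>\<alpha>2\<bar>) * \<tau>^2) \<and>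
          (UR = Phi2 \<beta>2 (Phi1 \<beta>1 UL 0) 0 \<and> UhR = Phi2 \<alpha>2 (Phi1 \<alpha>1 UL (\<tau>^2)) (\<tau>^2) \<longrightarrow>
          \<bar>\<beta>1 - \<alpha>1\<bar> \<le> C * (\<bar>\<alpha>1\<bar> + \<bar>\<alpha>2\<bar>) * \<tau>^2 + C * norm (UR - UhR) \<and>
          \<bar>\<beta>2 - \<alpha>2\<bar> \<le> C * (\<bar>\<alpha>1\<bar> + \<bar>\<alpha>2\<bar>) * \<tau>^2 + C * norm (UR - UhR))"
    proof (rule conjI; rule impI)
    show "UR = Phi2 \<beta>2 (Phi1 \<beta>1 UL 0) 0 \<and> UR = Phi2 \<alpha>2 (Phi1 \<alpha>1 UL (\<tau>^2)) (\<tau>^2) \<Longrightarrow>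
          \<bar>\<beta>1 - \<alpha>1\<bar> \<le> C * (\<bar>\<alpha>1\<bar> + \<bar>\<alpha>2\<bar>) * \<tau>^2 \<and> \<bar>\<beta>2 - \<alpha>2\<bar> \<le> C * (\<bar>\<alpha>1\<bar> + \<bar>\<alpha>2\<bar>) * \<tau>^2"
    proof -
      assume E: "UR = Phi2 \<beta>2 (Phi1 \<beta>1 UL 0) 0 \<and> UR = Phi2 \<alpha>2 (Phi1 \<alpha>1 UL (\<tau>^2)) (\<tau>^2)"
      then have "norm (Phi2 \<beta>2 (Phi1 \<beta>1 UL 0) 0 - Phi2 \<alpha>2 (Phi1 \<alpha>1 UL (\<tau>^2)) (\<tau>^2)) = 0" by (metis diff_self norm_zero)
      then show ?thesis using cr by auto
    qed
    show "UR = Phi2 \<beta>2 (Phi1 \<beta>1 UL 0) 0 \<and> UhR = Phi2 \<alpha>2 (Phi1 \<alpha>1 UL (\<tau>^2)) (\<tau>^2) \<Longrightarrow>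
          \<bar>\<beta>1 - \<alpha>1\<bar> \<le> C * (\<bar>\<alpha>1\<bar> + \<bar>\<alpha>2\<bar>) * \<tau>^2 + C * norm (UR - UhR) \<and>
          \<bar>\<beta>2 - \<alpha>2\<bar> \<le> C * (\<bar>\<alpha>1\<bar> + \<bar>\<alpha>2\<bar>) * \<tau>^2 + C * norm (UR - UhR)"
      using cr by auto
    qed
  qed
qed

end
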